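(* Let $T=(V,E)$ be a finite rooted tree with nonnegative partial costs, and $\Pr$ a probability distribution over a finite set of queries. The benefit function $B:2^V\to\mathbb{R}_{\ge0}$ is monotone (non-decreasing) and submodular.
   Context: $T=(V,E)$ is a finite rooted tree; $T(u)$ is the set of nodes of the subtree rooted at $u$ (including $u$); $A(u)$ the set of proper ancestors of $u$. Each non-leaf node is associated with a variable of a finite set $X$; $\mathrm{vars}(u)$ is the set of variables of nodes of $T(u)$; each query $q$ determines $Z_q\subseteq X$. For $R\subseteq V$, $w\in V$: $I_q(w,R)=1$ iff $w\in R$, $\mathrm{vars}(w)\subseteq Z_q$, and no $x\in A(w)\cap R$ has $\mathrm{vars}(x)\subseteq Z_q$; else $0$; $\mathbb{E}[I(w,R)]=\sum_q\Pr(q)I_q(w,R)$. Each node $x$ has partial cost $c(x)\ge0$, total cost $C(w)=\sum_{x\in T(w)}c(x)$. Benefit: $B(R)=\sum_{w\in R}\mathbb{E}[I(w,R)]C(w)$. *)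

theory Defs
  imports Complex_Main
begin

text \<open>A finite rooted tree on node set V with root r, given by a parent function par
  (par is only meaningful on V - {r}).\<close>
definition rooted_tree :: "'a set \<Rightarrow> 'a \<Rightarrow> ('a \<Rightarrow> 'a) \<Rightarrow> bool" where
  "rooted_tree V r par \<longleftrightarrow> finite V \<and> r \<in> V \<and>
     (\<forall>v\<in>V. v \<noteq> r \<longrightarrow> par v \<in> V) \<and>
     (\<forall>v\<in>V. \<exists>n. (par ^^ n) v = r)"

definition ancestors :: "'a \<Rightarrow> ('a \<Rightarrow> 'a) \<Rightarrow> 'a \<Rightarrow> 'a set" where
  "ancestors r par u = {(par ^^ k) u | k. 0 < k \<and> (\<forall>j<k. (par ^^ j) u \<noteq> r)}"

definition subtree :: "'a set \<Rightarrow> 'a \<Rightarrow> ('a \<Rightarrow> 'a) \<Rightarrow> 'a \<Rightarrow> 'a set" where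
  "subtree V r par u = {v \<in> V. v = u \<or> u \<in> ancestors r par v}"

definition is_leaf :: "'a set \<Rightarrow> 'a \<Rightarrow> ('a \<Rightarrow> 'a) \<Rightarrow> 'a \<Rightarrow> bool" where
  "is_leaf V r par u \<longleftrightarrow> subtree V r par u = {u}"

definition vars :: "'a set \<Rightarrow> 'a \<Rightarrow> ('a \<Rightarrow> 'a) \<Rightarrow> ('a \<Rightarrow> 'x) \<Rightarrow> 'a \<Rightarrow> 'x set" where
  "vars V r par var u = var ` {x \<in> subtree V r par u. \<not> is_leaf V r par x}"

definition indic :: "'a set \<Rightarrow> 'a \<Rightarrow> ('a \<Rightarrow> 'a) \<Rightarrow> ('a \<Rightarrow> 'x) \<Rightarrow> 'x set \<Rightarrow> 'a \<Rightarrow> 'a set \<Rightarrow> real" where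
  "indic V r par var Zq w R =
     (if w \<in> R \<and> vars V r par var w \<subseteq> Zq \<and>
         \<not> (\<exists>x \<in> ancestors r par w \<inter> R. vars V r par var x \<subseteq> Zq)
      then 1 else 0)"

definition total_cost :: "'a set \<Rightarrow> 'a \<Rightarrow> ('a \<Rightarrow> 'a) \<Rightarrow> ('a \<Rightarrow> real) \<Rightarrow> 'a \<Rightarrow> real" where
  "total_cost V r par c w = (\<Sum>x \<in> subtree V r par w. c x)"

text \<open>B(R) = sum over w in R of E[I(w,R)] * C(w); queries range over the finite set Q
  with probabilities P and Z q the variable set determined by query q.\<close>
definition benefit :: "'a set \<Rightarrow> 'a \<Rightarrow> ('a \<Rightarrow> 'a) \<Rightarrow> ('a \<Rightarrow> 'x) \<Rightarrow> ('a \<Rightarrow> real)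
    \<Rightarrow> 'q set \<Rightarrow> ('q \<Rightarrow> real) \<Rightarrow> ('q \<Rightarrow> 'x set) \<Rightarrow> 'a set \<Rightarrow> real" where
  "benefit V r par var c Q P Z R =
     (\<Sum>w \<in> R. (\<Sum>q \<in> Q. P q * indic V r par var (Z q) w R) * total_cost V r par c w)"

end

theory Submission
  imports Defs
begin

definition Dn :: "'a \<Rightarrow> ('a \<Rightarrow> 'a) \<Rightarrow> 'a \<Rightarrow> 'a set" where
  "Dn r par x = {(par ^^ k) x | k. \<forall>j<k. (par ^^ j) x \<noteq> r}"

lemma subtree_Dn: "subtree V r par w = {v\<in>V. w \<in> Dn r par v}"
  unfolding subtree_def ancestors_def Dn_def
  apply (rule Collect_cong)
  apply safe
     apply (rule_tac x=0 in exI; simp)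
    apply blast
   apply (case_tac k; simp)
   apply (rule_tac x="Suc nat" in exI; simp)
  done

lemma Dn_trans:
  assumes "w \<in> Dn r par x" "m \<in> Dn r par w" shows "m \<in> Dn r par x"
proof -
  obtain a where a: "w = (par^^a) x" "\<forall>j<a. (par ^^ j) x \<noteq> r" using assms(1) unfolding Dn_def by blast
  obtain b where b: "m = (par^^b) w" "\<forall>j<b. (par ^^ j) w \<noteq> r" using assms(2) unfolding Dn_def by blast
  have "m = (par^^(b+a)) x" using a b by (simp add: funpow_add)
  moreover have "\<forall>j<b+a. (par ^^ j) x \<noteq> r"
  proof (intro allI impI)
    fix j assume j: "j < b+a"
    show "(par ^^ j) x \<noteq> r"
    proof (cases "j < a")
      case True then show ?thesis using a by blast
    next
      case False
      then have "(par ^^ j) x = (par ^^ (j-a)) w" using a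
        by (metis funpow_add le_add_diff_inverse2 not_less o_apply)
      then show ?thesis using b j False by auto
    qed
  qed
  ultimately show ?thesis unfolding Dn_def by blast
qed

lemma Dn_chain:
  assumes "w1 \<in> Dn r par x" "w2 \<in> Dn r par x" "w1 \<noteq> w2"
  shows "w1 \<in> ancestors r par w2 \<or> w2 \<in> ancestors r par w1"
proof -
  have gen: "w2 \<in> ancestors r par w1" if
    a: "w1 = (par^^a) x" "\<forall>j<a. (par ^^ j) x \<noteq> r" and
    b: "w2 = (par^^b) x" "\<forall>j<b. (par ^^ j) x \<noteq> r" and ab: "a < b" for a b w1 w2
  proof -
    have "w2 = (par^^(b-a)) w1" using a b ab
      by (metis funpow_add le_add_diff_inverse2 less_imp_le o_apply)
    moreover have "\<forall>j<b-a. (par ^^ j) w1 \<noteq> r"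
    proof (intro allI impI)
      fix j assume "j < b - a"
      then have "(par ^^ (j+a)) x \<noteq> r" using b by auto
      then show "(par ^^ j) w1 \<noteq> r" using a by (simp add: funpow_add)
    qed
    ultimately show ?thesis unfolding ancestors_def using ab by force
  qed
  obtain a where a: "w1 = (par^^a) x" "\<forall>j<a. (par ^^ j) x \<noteq> r" using assms(1) unfolding Dn_def by blast
  obtain b where b: "w2 = (par^^b) x" "\<forall>j<b. (par ^^ j) x \<noteq> r" using assms(2) unfolding Dn_def by blast
  have "a \<noteq> b" using a b assms(3) by auto
  then have "a < b \<or> b < a" by arith
  then show ?thesis using gen a b by blast
qed

lemma maximal_exists:
  assumes tree: "rooted_tree V r par" and w: "w \<in> V" and S: "w \<in> S"
  shows "\<exists>m\<in>S. m \<in> Dn r par w \<and> ancestors r par m \<inter> S = {}"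
proof -
  obtain n where n: "(par^^n) w = r" using tree w unfolding rooted_tree_def by blast
  define K where "K = {k. (\<forall>j<k. (par ^^ j) w \<noteq> r) \<and> (par ^^ k) w \<in> S}"
  have K0: "0 \<in> K" using S unfolding K_def by simp
  have Kb: "K \<subseteq> {..n}" unfolding K_def using n by (auto simp: not_le[symmetric])
  have finK: "finite K" using Kb finite_subset by blast
  define k where "k = Max K"
  have kK: "k \<in> K" unfolding k_def by (rule Max_in[OF finK]) (use K0 in blast)
  have kmax: "\<And>i. i \<in> K \<Longrightarrow> i \<le> k" unfolding k_def using finK by simp
  define m where "m = (par ^^ k) w"
  have mS: "m \<in> S" using kK unfolding K_def m_def by blast
  have mD: "m \<in> Dn r par w" using kK unfolding K_def m_def Dn_def by blast
  have "ancestors r par m \<inter> S = {}"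
  proof (rule ccontr)
    assume "ancestors r par m \<inter> S \<noteq> {}"
    then obtain y i where y: "y \<in> S" "y = (par^^i) m" "0 < i" "\<forall>j<i. (par ^^ j) m \<noteq> r"
      unfolding ancestors_def by blast
    have "i + k \<in> K"
      unfolding K_def
    proof (intro CollectI conjI allI impI)
      show "(par ^^ (i+k)) w \<in> S" using y unfolding m_def by (simp add: funpow_add)
      fix j assume j: "j < i + k"
      show "(par ^^ j) w \<noteq> r"
      proof (cases "j < k")
        case True then show ?thesis using kK unfolding K_def by blast
      next
        case False
        then have "(par ^^ j) w = (par ^^ (j-k)) m" unfolding m_def
          by (metis funpow_add le_add_diff_inverse2 not_less o_apply)
        then show ?thesis using y j False by auto
      qed
    qed
    then show False using kmax y(3) by fastforce
  qed
  then show ?thesis using mS mD by blast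
qed

lemma subtree_sub: "subtree V r par w \<subseteq> V" unfolding subtree_def by blast

lemma cover:
  assumes tree: "rooted_tree V r par" and R: "R \<subseteq> V"
  shows "(\<Sum>w\<in>R. indic V r par var Zq w R * total_cost V r par c w)
     = (\<Sum>x\<in>\<Union> (subtree V r par ` {w\<in>R. vars V r par var w \<subseteq> Zq}). c x)"
proof -
  define G where "G = {w\<in>R. vars V r par var w \<subseteq> Zq}"
  define M where "M = {w\<in>G. ancestors r par w \<inter> G = {}}"
  have finV: "finite V" using tree unfolding rooted_tree_def by blast
  have finR: "finite R" using R finV finite_subset by blast
  have MR: "M \<subseteq> R" unfolding M_def G_def by blast
  have ind: "\<And>w. w \<in> R \<Longrightarrow> indic V r par var Zq w R = (if w \<in> M then 1 else 0)"
    unfolding indic_def M_def G_def by auto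
  have "(\<Sum>w\<in>R. indic V r par var Zq w R * total_cost V r par c w)
      = (\<Sum>w\<in>R. if w \<in> M then total_cost V r par c w else 0)"
    by (rule sum.cong) (auto simp: ind)
  also have "\<dots> = (\<Sum>w\<in>M. total_cost V r par c w)"
    by (simp add: sum.If_cases[OF finR] Int_absorb1[OF MR])
  also have "\<dots> = (\<Sum>x\<in>\<Union> (subtree V r par ` M). c x)"
    unfolding total_cost_def
  proof (rule sum.UNION_disjoint[symmetric])
    show "finite M" using MR finR finite_subset by blast
    show "\<forall>i\<in>M. finite (subtree V r par i)" using finV subtree_sub finite_subset by metis
    show "\<forall>i\<in>M. \<forall>j\<in>M. i \<noteq> j \<longrightarrow> subtree V r par i \<inter> subtree V r par j = {}"
    proof (intro ballI impI)
      fix i j assume i: "i \<in> M" and j: "j \<in> M" and ij: "i \<noteq> j"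
      show "subtree V r par i \<inter> subtree V r par j = {}"
      proof (rule ccontr)
        assume "subtree V r par i \<inter> subtree V r par j \<noteq> {}"
        then obtain x where "i \<in> Dn r par x" "j \<in> Dn r par x" unfolding subtree_Dn by blast
        then have "i \<in> ancestors r par j \<or> j \<in> ancestors r par i" using Dn_chain ij by metis
        then show False using i j unfolding M_def by blast
      qed
    qed
  qed
  also have "\<Union> (subtree V r par ` M) = \<Union> (subtree V r par ` G)"
  proof
    show "\<Union> (subtree V r par ` M) \<subseteq> \<Union> (subtree V r par ` G)" unfolding M_def by blast
    show "\<Union> (subtree V r par ` G) \<subseteq> \<Union> (subtree V r par ` M)"
    proof
      fix x assume "x \<in> \<Union> (subtree V r par ` G)"
      then obtain w where w: "w \<in> G" "x \<in> subtree V r par w" by blast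
      have wV: "w \<in> V" using w(1) R unfolding G_def by blast
      obtain m where m: "m \<in> G" "m \<in> Dn r par w" "ancestors r par m \<inter> G = {}"
        using maximal_exists[OF tree wV w(1)] by blast
      have "x \<in> subtree V r par m" using w(2) m(2) Dn_trans unfolding subtree_Dn by fast
      moreover have "m \<in> M" using m unfolding M_def by blast
      ultimately show "x \<in> \<Union> (subtree V r par ` M)" by blast
    qed
  qed
  finally show ?thesis unfolding G_def .
qed


definition UU :: "'a set \<Rightarrow> 'a \<Rightarrow> ('a \<Rightarrow> 'a) \<Rightarrow> ('a \<Rightarrow> 'x) \<Rightarrow> 'x set \<Rightarrow> 'a set \<Rightarrow> 'a set" where
  "UU V r par var Zq R = \<Union> (subtree V r par ` {w\<in>R. vars V r par var w \<subseteq> Zq})"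

lemma UU_sub: "UU V r par var Zq R \<subseteq> V" unfolding UU_def using subtree_sub[of V r par] by blast

lemma UU_mono: "R \<subseteq> S \<Longrightarrow> UU V r par var Zq R \<subseteq> UU V r par var Zq S" unfolding UU_def by blast

lemma filter_ins: "{w \<in> insert x A. p w} = (if p x then insert x {w \<in> A. p w} else {w \<in> A. p w})"
  by auto

lemma UU_insert: "UU V r par var Zq (insert x A) = UU V r par var Zq A \<union>
   (if vars V r par var x \<subseteq> Zq then subtree V r par x else {})"
proof -
  have "{w \<in> insert x A. vars V r par var w \<subseteq> Zq} = (if vars V r par var x \<subseteq> Zq
     then insert x {w \<in> A. vars V r par var w \<subseteq> Zq} else {w \<in> A. vars V r par var w \<subseteq> Zq})"
    using filter_ins[of x A "\<lambda>w. vars V r par var w \<subseteq> Zq"] .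
  then show ?thesis unfolding UU_def by (simp add: Un_commute)
qed

lemma diff_sum:
  fixes c :: "'a \<Rightarrow> real"
  assumes "finite A" "finite B"
  shows "sum c (A \<union> B) - sum c A = sum c (B - A)"
proof -
  have "A \<union> B = A \<union> (B - A)" by blast
  moreover have "sum c (A \<union> (B - A)) = sum c A + sum c (B - A)"
    using assms by (intro sum.union_disjoint) auto
  ultimately have "sum c (A \<union> B) = sum c A + sum c (B - A)" by simp
  then show ?thesis by simp
qed

lemma benefit_eq:
  assumes tree: "rooted_tree V r par" and R: "R \<subseteq> V"
  shows "benefit V r par var c Q P Z R = (\<Sum>q\<in>Q. P q * sum c (UU V r par var (Z q) R))"
proof -
  have "benefit V r par var c Q P Z R =
     (\<Sum>w\<in>R. \<Sum>q\<in>Q. P q * (indic V r par var (Z q) w R * total_cost V r par c w))"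
    unfolding benefit_def by (simp add: sum_distrib_right mult.assoc)
  also have "\<dots> = (\<Sum>q\<in>Q. \<Sum>w\<in>R. P q * (indic V r par var (Z q) w R * total_cost V r par c w))"
    by (rule sum.swap)
  also have "\<dots> = (\<Sum>q\<in>Q. P q * sum c (UU V r par var (Z q) R))"
    by (simp only: sum_distrib_left[symmetric] cover[OF tree R] UU_def)
  finally show ?thesis .
qed

theorem lemma7:
  fixes V :: "'a set" and r :: 'a and par :: "'a \<Rightarrow> 'a" and var :: "'a \<Rightarrow> 'x"
    and X :: "'x set" and c :: "'a \<Rightarrow> real"
    and Q :: "'q set" and P :: "'q \<Rightarrow> real" and Z :: "'q \<Rightarrow> 'x set"
  assumes tree: "rooted_tree V r par"
    and X_fin: "finite X"
    and var_X: "\<forall>u\<in>V. \<not> is_leaf V r par u \<longrightarrow> var u \<in> X"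
    and c_nonneg: "\<forall>x\<in>V. c x \<ge> 0"
    and Q_fin: "finite Q"
    and P_nonneg: "\<forall>q\<in>Q. P q \<ge> 0"
    and P_sum: "(\<Sum>q\<in>Q. P q) = 1"
    and Z_X: "\<forall>q\<in>Q. Z q \<subseteq> X"
  shows "(\<forall>R. R \<subseteq> V \<longrightarrow> benefit V r par var c Q P Z R \<ge> 0)
    \<and> (\<forall>R S. R \<subseteq> S \<and> S \<subseteq> V \<longrightarrow>
          benefit V r par var c Q P Z R \<le> benefit V r par var c Q P Z S)
    \<and> (\<forall>R S x. R \<subseteq> S \<and> S \<subseteq> V \<and> x \<in> V - S \<longrightarrow>
          benefit V r par var c Q P Z (insert x S) - benefit V r par var c Q P Z S
          \<le> benefit V r par var c Q P Z (insert x R) - benefit V r par var c Q P Z R)"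
proof -
  have finV: "finite V" using tree unfolding rooted_tree_def by blast
  have finU: "\<And>Zq A. finite (UU V r par var Zq A)" using finV UU_sub finite_subset by metis
  have finT: "\<And>x. finite (subtree V r par x)" using finV subtree_sub finite_subset by metis
  let ?f = "\<lambda>Zq A. sum c (UU V r par var Zq A)"
  have fnn: "\<And>Zq A. ?f Zq A \<ge> 0" using c_nonneg UU_sub by (meson subsetD sum_nonneg)
  have fmono: "\<And>Zq A B. A \<subseteq> B \<Longrightarrow> ?f Zq A \<le> ?f Zq B"
  proof (rule sum_mono2[OF finU UU_mono])
    fix Zq A B b assume "b \<in> UU V r par var Zq B - UU V r par var Zq A"
    then show "0 \<le> c b" using c_nonneg UU_sub[of V r par var Zq B] by blast
  qed
  have fsub: "\<And>Zq A B x. A \<subseteq> B \<Longrightarrow> ?f Zq (insert x B) - ?f Zq B \<le> ?f Zq (insert x A) - ?f Zq A"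
  proof -
    fix Zq A B x assume AB: "(A::'a set) \<subseteq> B"
    define Bx where "Bx = (if vars V r par var x \<subseteq> Zq then subtree V r par x else {})"
    have finBx: "finite Bx" unfolding Bx_def using finT by simp
    have BxV: "Bx \<subseteq> V" unfolding Bx_def using subtree_sub[of V r par x] by auto
    have e: "\<And>C. ?f Zq (insert x C) - ?f Zq C = sum c (Bx - UU V r par var Zq C)"
      unfolding UU_insert Bx_def[symmetric] by (rule diff_sum[OF finU finBx])
    show "?f Zq (insert x B) - ?f Zq B \<le> ?f Zq (insert x A) - ?f Zq A"
      unfolding e
      by (rule sum_mono2) (use finBx UU_mono[OF AB, of V r par var Zq] c_nonneg BxV in blast)+
  qed
  show ?thesis
  proof (intro conjI allI impI)
  fix R assume R: "R \<subseteq> V"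
  show "benefit V r par var c Q P Z R \<ge> 0"
    unfolding benefit_eq[OF tree R]
  proof (rule sum_nonneg)
    fix q assume q: "q \<in> Q"
    show "0 \<le> P q * ?f (Z q) R" using P_nonneg fnn[of "Z q" R] q by simp
  qed
next
  fix R S assume RS: "R \<subseteq> S \<and> S \<subseteq> V"
  show "benefit V r par var c Q P Z R \<le> benefit V r par var c Q P Z S"
    unfolding benefit_eq[OF tree order_trans[OF conjunct1[OF RS] conjunct2[OF RS]]] benefit_eq[OF tree conjunct2[OF RS]]
  proof (intro sum_mono mult_left_mono)
    fix q assume "q \<in> Q"
    then show "0 \<le> P q" using P_nonneg by blast
    show "?f (Z q) R \<le> ?f (Z q) S" using RS by (intro fmono) blast
  qed
next
  fix R S x assume H: "R \<subseteq> S \<and> S \<subseteq> V \<and> x \<in> V - S"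
  have sub: "R \<subseteq> V" "S \<subseteq> V" "insert x S \<subseteq> V" "insert x R \<subseteq> V" using H by auto
  show "benefit V r par var c Q P Z (insert x S) - benefit V r par var c Q P Z S
          \<le> benefit V r par var c Q P Z (insert x R) - benefit V r par var c Q P Z R"
    unfolding benefit_eq[OF tree sub(1)] benefit_eq[OF tree sub(2)]
      benefit_eq[OF tree sub(3)] benefit_eq[OF tree sub(4)] sum_subtractf[symmetric]
      right_diff_distrib[symmetric]
  proof (intro sum_mono mult_left_mono)
    fix q assume "q \<in> Q"
    then show "0 \<le> P q" using P_nonneg by blast
    show "?f (Z q) (insert x S) - ?f (Z q) S \<le> ?f (Z q) (insert x R) - ?f (Z q) R"
      using H by (intro fsub) blast
  qed
qed
qed

end
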